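(* Let $\alpha$ be a countably infinite order type and $S$ a sierpinskisation of $\alpha$ and $\omega$. Then the join-semilattice $I_{<\omega}(S)$ is isomorphic to a join-subsemilattice of $[\omega]^{<\omega}$ and belongs to $\mathbb{J}_\alpha$, i.e. the lattice $J(I_{<\omega}(S))$ of ideals of $I_{<\omega}(S)$ contains a chain of order type $I(\alpha)$.
   Context: A sierpinskisation of a countable order type $\alpha$ and $\omega$ is a poset $(S,\le)$ whose order is the intersection of two linear orders on $S$, one of type $\alpha$ and one of type $\omega$. $I_{<\omega}(S)$ is the set of finitely generated initial segments of $S$ ordered by inclusion (join $=$ union). $[\omega]^{<\omega}$ is the set of finite subsets of $\mathbb{N}$ ordered by inclusion. An ideal is a non-empty up-directed initial segment; $J(\cdot)$ is the set of ideals ordered by inclusion. $\mathbb{J}_\alpha$ is the class of join-semilattices $P$ with a least element such that $J(P)$ contains a chain of type $I(\alpha)$, where $I(\alpha)$ is the order type of the chain of initial segments of a chain of type $\alpha$. *)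

theory Defs
  imports Main
begin

definition omega_type :: "'a set \<Rightarrow> 'a rel \<Rightarrow> bool" where
  "omega_type S W \<longleftrightarrow> W \<subseteq> S \<times> S \<and>
     (\<exists>h. bij_betw h S (UNIV :: nat set) \<and> (\<forall>x\<in>S. \<forall>y\<in>S. (x, y) \<in> W \<longleftrightarrow> h x \<le> h y))"

text \<open>Sierpinskisation of (S,A) and (S,W): the poset (S, A \<inter> W), where A is a linear
  order on S (of type alpha) and W a linear order on S of type omega.\<close>
definition sierpinskisation :: "'a set \<Rightarrow> 'a rel \<Rightarrow> 'a rel \<Rightarrow> bool" where
  "sierpinskisation S A W \<longleftrightarrow> linear_order_on S A \<and> omega_type S W"

definition downset :: "'a set \<Rightarrow> 'a rel \<Rightarrow> 'a set \<Rightarrow> 'a set" where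
  "downset S R F = {x \<in> S. \<exists>y\<in>F. (x, y) \<in> R}"

definition initial_segments :: "'a set \<Rightarrow> 'a rel \<Rightarrow> 'a set set" where
  "initial_segments S R = {X. X \<subseteq> S \<and> (\<forall>x\<in>X. \<forall>y\<in>S. (y, x) \<in> R \<longrightarrow> y \<in> X)}"

definition fin_gen_initials :: "'a set \<Rightarrow> 'a rel \<Rightarrow> 'a set set" where
  "fin_gen_initials S R = {downset S R F | F. finite F \<and> F \<subseteq> S}"

definition ideals :: "'b set set \<Rightarrow> 'b set set set" where
  "ideals P = {I. I \<subseteq> P \<and> I \<noteq> {} \<and>
      (\<forall>x\<in>I. \<forall>y\<in>P. y \<subseteq> x \<longrightarrow> y \<in> I) \<and>
      (\<forall>x\<in>I. \<forall>y\<in>I. \<exists>z\<in>I. x \<subseteq> z \<and> y \<subseteq> z)}"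

text \<open>Membership of a family P of sets (ordered by inclusion, join = union) in the class
  J_alpha, where alpha is the type of the chain (S,A): P is a join-semilattice with least
  element and J(P) contains a chain of type I(alpha), i.e. there is an order embedding of
  the chain of initial segments of (S,A) into J(P).\<close>
definition in_J_class :: "'b set set \<Rightarrow> 'a set \<Rightarrow> 'a rel \<Rightarrow> bool" where
  "in_J_class P S A \<longleftrightarrow>
     (\<forall>X\<in>P. \<forall>Y\<in>P. X \<union> Y \<in> P) \<and> (\<exists>b\<in>P. \<forall>X\<in>P. b \<subseteq> X) \<and>
     (\<exists>f. (\<forall>X\<in>initial_segments S A. f X \<in> ideals P) \<and>
          (\<forall>X\<in>initial_segments S A. \<forall>Y\<in>initial_segments S A. f X \<subseteq> f Y \<longleftrightarrow> X \<subseteq> Y))"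

end

theory Submission
  imports Defs
begin

theorem lemma2p1:
  fixes S :: "'a set" and A W :: "'a rel"
  assumes "sierpinskisation S A W"
  shows "(\<exists>g :: 'a set \<Rightarrow> nat set. inj_on g (fin_gen_initials S (A \<inter> W)) \<and>
            (\<forall>X\<in>fin_gen_initials S (A \<inter> W). finite (g X)) \<and>
            (\<forall>X\<in>fin_gen_initials S (A \<inter> W). \<forall>Y\<in>fin_gen_initials S (A \<inter> W).
                g (X \<union> Y) = g X \<union> g Y))
       \<and> in_J_class (fin_gen_initials S (A \<inter> W)) S A"
proof -
  let ?R = "A \<inter> W"
  let ?P = "fin_gen_initials S ?R"
  from assms have lin: "linear_order_on S A" and om: "omega_type S W"
    unfolding sierpinskisation_def by auto
  from om obtain h where hb: "bij_betw h S (UNIV :: nat set)"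
    and hW: "\<forall>x\<in>S. \<forall>y\<in>S. (x, y) \<in> W \<longleftrightarrow> h x \<le> h y" and WS: "W \<subseteq> S \<times> S"
    unfolding omega_type_def by blast
  have reflA: "\<forall>x\<in>S. (x,x) \<in> A" using lin
    unfolding linear_order_on_def partial_order_on_def preorder_on_def refl_on_def by blast
  have injh: "inj_on h S" using hb bij_betw_def by blast
  have PS: "X \<subseteq> S" if "X \<in> ?P" for X using that unfolding fin_gen_initials_def downset_def by auto
  have fin: "finite X" if "X \<in> ?P" for X
  proof -
    from that obtain F where F: "finite F" "F \<subseteq> S" "X = downset S ?R F"
      unfolding fin_gen_initials_def by blast
    have "h ` X \<subseteq> {..Max (h ` F)}"
    proof
      fix n assume "n \<in> h ` X"
      then obtain x where x: "x \<in> X" "n = h x" by blast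
      then obtain y where y: "y \<in> F" "(x,y) \<in> W" "x \<in> S" using F unfolding downset_def by blast
      then have "h x \<le> h y" using hW F by blast
      also have "h y \<le> Max (h ` F)" using F y by auto
      finally show "n \<in> {..Max (h ` F)}" using x by simp
    qed
    then have "finite (h ` X)" using finite_subset by blast
    moreover have "inj_on h X" using injh PS[OF that] inj_on_subset by blast
    ultimately show ?thesis using finite_imageD by blast
  qed
  have part1: "\<exists>g :: 'a set \<Rightarrow> nat set. inj_on g ?P \<and> (\<forall>X\<in>?P. finite (g X)) \<and>
            (\<forall>X\<in>?P. \<forall>Y\<in>?P. g (X \<union> Y) = g X \<union> g Y)"
  proof (intro exI[of _ "\<lambda>X. h ` X"] conjI ballI)
    show "inj_on ((`) h) ?P"
    proof (rule inj_onI)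
      fix X Y assume "X \<in> ?P" "Y \<in> ?P" "h ` X = h ` Y"
      then show "X = Y" using PS injh inj_on_image_eq_iff by metis
    qed
  next
    fix X assume "X \<in> ?P" then show "finite (h ` X)" using fin by blast
  next
    fix X Y show "h ` (X \<union> Y) = h ` X \<union> h ` Y" by auto
  qed
  have un: "\<forall>X\<in>?P. \<forall>Y\<in>?P. X \<union> Y \<in> ?P"
  proof (intro ballI)
    fix X Y assume "X \<in> ?P" "Y \<in> ?P"
    then obtain F G where "finite F" "F \<subseteq> S" "X = downset S ?R F"
      "finite G" "G \<subseteq> S" "Y = downset S ?R G" unfolding fin_gen_initials_def by blast
    then have "X \<union> Y = downset S ?R (F \<union> G)" unfolding downset_def by auto
    then show "X \<union> Y \<in> ?P" unfolding fin_gen_initials_def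
      using \<open>finite F\<close> \<open>finite G\<close> \<open>F \<subseteq> S\<close> \<open>G \<subseteq> S\<close> by blast
  qed
  have emp: "{} \<in> ?P" unfolding fin_gen_initials_def downset_def by auto
  have princ: "downset S ?R {x} \<in> ?P" if "x \<in> S" for x
    unfolding fin_gen_initials_def using that by blast
  have xin: "x \<in> downset S ?R {x}" if "x \<in> S" for x
    using that reflA hW unfolding downset_def by auto
  define f where "f X = {D \<in> ?P. D \<subseteq> X}" for X
  have ideal: "f X \<in> ideals ?P" for X
  proof -
    have "\<exists>z\<in>f X. x \<subseteq> z \<and> y \<subseteq> z" if "x \<in> f X" "y \<in> f X" for x y
      using that un unfolding f_def by (intro bexI[of _ "x \<union> y"]) auto
    then show ?thesis unfolding ideals_def using emp unfolding f_def by auto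
  qed
  have emb: "f X \<subseteq> f Y \<longleftrightarrow> X \<subseteq> Y" if "X \<in> initial_segments S A" for X Y
  proof
    assume sub: "f X \<subseteq> f Y"
    show "X \<subseteq> Y"
    proof
      fix x assume "x \<in> X"
      then have xS: "x \<in> S" using that unfolding initial_segments_def by auto
      have "downset S ?R {x} \<subseteq> X" using that \<open>x \<in> X\<close>
        unfolding initial_segments_def downset_def by auto
      then have "downset S ?R {x} \<in> f X" using princ[OF xS] unfolding f_def by auto
      then have "downset S ?R {x} \<subseteq> Y" using sub unfolding f_def by auto
      then show "x \<in> Y" using xin[OF xS] by auto
    qed
  next
    assume "X \<subseteq> Y" then show "f X \<subseteq> f Y" unfolding f_def by auto
  qed
  have "in_J_class ?P S A"
    unfolding in_J_class_def using un emp ideal emb by blast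
  with part1 show ?thesis by blast
qed

end
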